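(* Let $G_1$ and $G_2$ be connected $k$-regular graphs with $|V(G_1)|=|V(G_2)|=n$ and $Z(G_1)\neq Z(G_2)$. Let $m\geq n$, and let $G'=(G_1\vee P_m)\cup G_2$ and $G''=(G_2\vee P_m)\cup G_1$, where $\cup$ denotes disjoint union. Then $G'$ and $G''$ are nonisomorphic graphs that are cospectral with respect to the adjacency matrix, and $Z(G')\neq Z(G'')$.
   Context: Graphs are finite, simple, undirected. $P_m$ is the path on $m$ vertices. The join $G\vee H$ is the disjoint union of $G$ and $H$ together with all edges $\{u,v\}$, $u\in V(G)$, $v\in V(H)$. The zero forcing number $Z(G)$ is the minimum size of a set $S\subseteq V(G)$ such that, if the vertices of $S$ are colored blue and all others white, repeated application of the rule "a blue vertex with exactly one white neighbor forces that neighbor to become blue" eventually makes every vertex blue. *)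

theory Defs
  imports Main "Jordan_Normal_Form.Char_Poly"
begin

record 'a graph =
  verts :: "'a set"
  adj :: "'a \<Rightarrow> 'a \<Rightarrow> bool"

definition sgraph :: "('a, 'b) graph_scheme \<Rightarrow> bool" where
  "sgraph G \<longleftrightarrow> finite (verts G) \<and>
     (\<forall>u v. adj G u v \<longrightarrow> u \<in> verts G \<and> v \<in> verts G \<and> u \<noteq> v \<and> adj G v u)"

definition neighbors :: "('a, 'b) graph_scheme \<Rightarrow> 'a \<Rightarrow> 'a set" where
  "neighbors G v = {u. adj G v u}"

definition regular :: "nat \<Rightarrow> ('a, 'b) graph_scheme \<Rightarrow> bool" where
  "regular k G \<longleftrightarrow> (\<forall>v\<in>verts G. card (neighbors G v) = k)"

definition connected_graph :: "('a, 'b) graph_scheme \<Rightarrow> bool" where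
  "connected_graph G \<longleftrightarrow> verts G \<noteq> {} \<and>
     (\<forall>u\<in>verts G. \<forall>v\<in>verts G. (u, v) \<in> {(x, y). adj G x y}\<^sup>*)"

definition path_graph :: "nat \<Rightarrow> nat graph" where
  "path_graph m = \<lparr> verts = {..<m},
     adj = (\<lambda>i j. i < m \<and> j < m \<and> (j = i + 1 \<or> i = j + 1)) \<rparr>"

definition disj_union :: "'a graph \<Rightarrow> 'b graph \<Rightarrow> ('a + 'b) graph" where
  "disj_union G H = \<lparr> verts = Inl ` verts G \<union> Inr ` verts H,
     adj = (\<lambda>x y. case (x, y) of
              (Inl a, Inl b) \<Rightarrow> adj G a b
            | (Inr a, Inr b) \<Rightarrow> adj H a b
            | _ \<Rightarrow> False) \<rparr>"

definition graph_join :: "'a graph \<Rightarrow> 'b graph \<Rightarrow> ('a + 'b) graph" where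
  "graph_join G H = \<lparr> verts = Inl ` verts G \<union> Inr ` verts H,
     adj = (\<lambda>x y. case (x, y) of
              (Inl a, Inl b) \<Rightarrow> adj G a b
            | (Inr a, Inr b) \<Rightarrow> adj H a b
            | (Inl a, Inr b) \<Rightarrow> a \<in> verts G \<and> b \<in> verts H
            | (Inr a, Inl b) \<Rightarrow> a \<in> verts H \<and> b \<in> verts G) \<rparr>"

definition graph_iso :: "'a graph \<Rightarrow> 'b graph \<Rightarrow> bool" where
  "graph_iso G H \<longleftrightarrow> (\<exists>f. bij_betw f (verts G) (verts H) \<and>
     (\<forall>u\<in>verts G. \<forall>v\<in>verts G. adj G u v \<longleftrightarrow> adj H (f u) (f v)))"

text \<open>Set of vertices that are eventually blue, starting from blue set S, under the
  rule: a blue vertex u with exactly one white neighbour v forces v.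
  (The final coloring is independent of the order of forces.)\<close>
inductive_set forced_closure :: "'a graph \<Rightarrow> 'a set \<Rightarrow> 'a set"
  for G :: "'a graph" and S :: "'a set" where
  init: "x \<in> S \<Longrightarrow> x \<in> forced_closure G S"
| force: "\<lbrakk> u \<in> forced_closure G S; u \<in> verts G; adj G u v;
            \<forall>w. adj G u w \<and> w \<noteq> v \<longrightarrow> w \<in> forced_closure G S \<rbrakk>
          \<Longrightarrow> v \<in> forced_closure G S"

definition zero_forcing_set :: "'a graph \<Rightarrow> 'a set \<Rightarrow> bool" where
  "zero_forcing_set G S \<longleftrightarrow> S \<subseteq> verts G \<and> forced_closure G S = verts G"

definition zero_forcing_number :: "'a graph \<Rightarrow> nat" where
  "zero_forcing_number G = Min (card ` {S. zero_forcing_set G S})"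

text \<open>Adjacency matrix w.r.t. an (arbitrary, fixed) enumeration of the vertices;
  its characteristic polynomial does not depend on the enumeration.\<close>
definition vertex_enum :: "'a graph \<Rightarrow> nat \<Rightarrow> 'a" where
  "vertex_enum G = (SOME f. bij_betw f {..<card (verts G)} (verts G))"

definition adj_matrix :: "'a graph \<Rightarrow> real mat" where
  "adj_matrix G = mat (card (verts G)) (card (verts G))
     (\<lambda>(i, j). if adj G (vertex_enum G i) (vertex_enum G j) then 1 else 0)"

definition cospectral :: "'a graph \<Rightarrow> 'b graph \<Rightarrow> bool" where
  "cospectral G H \<longleftrightarrow> char_poly (adj_matrix G) = char_poly (adj_matrix H)"

end

theory Submission
  imports Defs
begin

definition adjv :: "'a graph \<Rightarrow> bool" where
  "adjv G \<longleftrightarrow> (\<forall>u v. adj G u v \<longrightarrow> u \<in> verts G \<and> v \<in> verts G)"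

lemma closure_sub_verts:
  assumes "adjv G" "S \<subseteq> verts G"
  shows "forced_closure G S \<subseteq> verts G"
proof
  fix x assume "x \<in> forced_closure G S"
  then show "x \<in> verts G"
    by induction (use assms in \<open>auto simp: adjv_def\<close>)
qed

lemma closure_stuck:
  assumes "\<forall>u\<in>S. card ({w. adj G u w} - S) \<noteq> 1"
  shows "forced_closure G S \<subseteq> S"
proof
  fix x assume "x \<in> forced_closure G S"
  then show "x \<in> S"
  proof induction
    case (init x) then show ?case .
  next
    case (force u v)
    show ?case
    proof (rule ccontr)
      assume "v \<notin> S"
      have "{w. adj G u w} - S = {v}" using force \<open>v \<notin> S\<close> by auto
      then show False using assms force by auto
    qed
  qed
qed

lemma ZF_lower:
  assumes "sgraph G" "\<forall>u\<in>verts G. d \<le> card (neighbors G u)" "d \<le> card (verts G)"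
    and "zero_forcing_set G S"
  shows "d \<le> card S"
proof (cases "S = verts G")
  case True then show ?thesis using assms by simp
next
  case False
  have fin: "finite (verts G)" using assms(1) by (simp add: sgraph_def)
  have SV: "S \<subseteq> verts G" and cl: "forced_closure G S = verts G"
    using assms(4) by (auto simp: zero_forcing_set_def)
  have "\<not> (\<forall>u\<in>S. card ({w. adj G u w} - S) \<noteq> 1)"
  proof
    assume "\<forall>u\<in>S. card ({w. adj G u w} - S) \<noteq> 1"
    from closure_stuck[OF this] cl SV False show False by auto
  qed
  then obtain u where uS: "u \<in> S" and c1: "card ({w. adj G u w} - S) = 1" by auto
  then obtain v where v: "{w. adj G u w} - S = {v}" by (auto simp: card_Suc_eq)
  have nu: "\<not> adj G u u" using assms(1) by (auto simp: sgraph_def)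
  have "neighbors G u \<subseteq> insert v (S - {u})" using v nu by (auto simp: neighbors_def)
  moreover have "finite S" using SV fin finite_subset by blast
  ultimately have "card (neighbors G u) \<le> card (insert v (S - {u}))"
    by (intro card_mono) auto
  also have "\<dots> \<le> Suc (card (S - {u}))" by (simp add: card_insert_le_m1 card_insert_if)
  also have "\<dots> = card S" using uS \<open>finite S\<close>
    by (metis Suc_pred card.remove card_gt_0_iff emptyE)
  finally show ?thesis using assms(2) uS SV by fastforce
qed

lemma ZF_finite_set:
  assumes "finite (verts G)"
  shows "finite {S. zero_forcing_set G S}"
  by (rule finite_subset[of _ "Pow (verts G)"]) (use assms in \<open>auto simp: zero_forcing_set_def\<close>)

lemma ZF_verts:
  assumes "adjv G" shows "zero_forcing_set G (verts G)"
  using closure_sub_verts[OF assms, of "verts G"] forced_closure.init[of _ "verts G" G]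
  by (auto simp: zero_forcing_set_def)

lemma Z_le:
  assumes "finite (verts G)" "zero_forcing_set G S"
  shows "zero_forcing_number G \<le> card S"
  unfolding zero_forcing_number_def
  using assms ZF_finite_set[OF assms(1)] by (intro Min_le) auto

lemma Z_ex:
  assumes "finite (verts G)" "adjv G"
  shows "\<exists>S. zero_forcing_set G S \<and> card S = zero_forcing_number G"
proof -
  have ne: "card ` {S. zero_forcing_set G S} \<noteq> {}" using ZF_verts[OF assms(2)] by auto
  have "zero_forcing_number G \<in> card ` {S. zero_forcing_set G S}"
    unfolding zero_forcing_number_def
    using ZF_finite_set[OF assms(1)] ne by (intro Min_in) auto
  then show ?thesis by auto
qed

lemma Z_ge:
  assumes "finite (verts G)" "adjv G" "\<And>S. zero_forcing_set G S \<Longrightarrow> d \<le> card S"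
  shows "d \<le> zero_forcing_number G"
  using Z_ex[OF assms(1,2)] assms(3) by metis

lemma Z_pos_le:
  assumes "finite (verts G)" "adjv G" "verts G \<noteq> {}"
  shows "1 \<le> zero_forcing_number G" "zero_forcing_number G \<le> card (verts G)"
proof -
  show "zero_forcing_number G \<le> card (verts G)" using Z_le[OF assms(1) ZF_verts[OF assms(2)]] .
  show "1 \<le> zero_forcing_number G"
  proof (rule Z_ge[OF assms(1,2)])
    fix S assume zs: "zero_forcing_set G S"
    have "S \<noteq> {}"
    proof
      assume "S = {}"
      then have "forced_closure G S \<subseteq> {}" using closure_stuck[of S G] by auto
      then show False using zs assms(3) by (auto simp: zero_forcing_set_def)
    qed
    moreover have "finite S" using zs assms(1) finite_subset by (auto simp: zero_forcing_set_def)
    ultimately show "1 \<le> card S" by (simp add: Suc_le_eq card_gt_0_iff)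
  qed
qed



lemma du_adj_simps[simp]:
  "adj (disj_union G H) (Inl a) (Inl b) = adj G a b"
  "adj (disj_union G H) (Inr c) (Inr d) = adj H c d"
  "adj (disj_union G H) (Inl a) (Inr d) = False"
  "adj (disj_union G H) (Inr c) (Inl b) = False"
  "verts (disj_union G H) = Inl ` verts G \<union> Inr ` verts H"
  by (auto simp: disj_union_def)

lemma du_closure1:
  assumes "x \<in> forced_closure (disj_union G H) S"
  shows "x \<in> Inl ` forced_closure G (Inl -` S) \<union> Inr ` forced_closure H (Inr -` S)"
  using assms
proof induction
  case (init x) then show ?case by (cases x) (auto intro: forced_closure.init)
next
  case (force u v)
  show ?case
  proof (cases u)
    case (Inl a)
    then obtain b where vb: "v = Inl b" using force by (cases v) auto
    have a: "a \<in> forced_closure G (Inl -` S)" using force Inl by auto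
    have "b \<in> forced_closure G (Inl -` S)"
    proof (rule forced_closure.force[OF a])
      show "a \<in> verts G" using force Inl by auto
      show "adj G a b" using force Inl vb by auto
      show "\<forall>w. adj G a w \<and> w \<noteq> b \<longrightarrow> w \<in> forced_closure G (Inl -` S)"
      proof (intro allI impI)
        fix w assume "adj G a w \<and> w \<noteq> b"
        then have "adj (disj_union G H) u (Inl w) \<and> Inl w \<noteq> v" using Inl vb by simp
        then have "Inl w \<in> Inl ` forced_closure G (Inl -` S) \<union> Inr ` forced_closure H (Inr -` S)"
          using force by blast
        then show "w \<in> forced_closure G (Inl -` S)" by auto
      qed
    qed
    then show ?thesis using vb by auto
  next
    case (Inr a)
    then obtain b where vb: "v = Inr b" using force by (cases v) auto
    have a: "a \<in> forced_closure H (Inr -` S)" using force Inr by auto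
    have "b \<in> forced_closure H (Inr -` S)"
    proof (rule forced_closure.force[OF a])
      show "a \<in> verts H" using force Inr by auto
      show "adj H a b" using force Inr vb by auto
      show "\<forall>w. adj H a w \<and> w \<noteq> b \<longrightarrow> w \<in> forced_closure H (Inr -` S)"
      proof (intro allI impI)
        fix w assume "adj H a w \<and> w \<noteq> b"
        then have "adj (disj_union G H) u (Inr w) \<and> Inr w \<noteq> v" using Inr vb by simp
        then have "Inr w \<in> Inl ` forced_closure G (Inl -` S) \<union> Inr ` forced_closure H (Inr -` S)"
          using force by blast
        then show "w \<in> forced_closure H (Inr -` S)" by auto
      qed
    qed
    then show ?thesis using vb by auto
  qed
qed

lemma du_closure2:
  assumes "a \<in> forced_closure G (Inl -` S)"
  shows "Inl a \<in> forced_closure (disj_union G H) S"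
  using assms
proof induction
  case (init x) then show ?case by (auto intro: forced_closure.init)
next
  case (force u v)
  have IHu: "Inl u \<in> forced_closure (disj_union G H) S" using force by blast
  show ?case
  proof (rule forced_closure.force[OF IHu])
    show "Inl u \<in> verts (disj_union G H)" using force by auto
    show "adj (disj_union G H) (Inl u) (Inl v)" using force by auto
    show "\<forall>w. adj (disj_union G H) (Inl u) w \<and> w \<noteq> Inl v \<longrightarrow> w \<in> forced_closure (disj_union G H) S"
    proof (intro allI impI)
      fix w assume "adj (disj_union G H) (Inl u) w \<and> w \<noteq> Inl v"
      then show "w \<in> forced_closure (disj_union G H) S" using force(5) by (cases w) auto
    qed
  qed
qed

lemma du_closure3:
  assumes "a \<in> forced_closure H (Inr -` S)"
  shows "Inr a \<in> forced_closure (disj_union G H) S"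
  using assms
proof induction
  case (init x) then show ?case by (auto intro: forced_closure.init)
next
  case (force u v)
  have IHu: "Inr u \<in> forced_closure (disj_union G H) S" using force by blast
  show ?case
  proof (rule forced_closure.force[OF IHu])
    show "Inr u \<in> verts (disj_union G H)" using force by auto
    show "adj (disj_union G H) (Inr u) (Inr v)" using force by auto
    show "\<forall>w. adj (disj_union G H) (Inr u) w \<and> w \<noteq> Inr v \<longrightarrow> w \<in> forced_closure (disj_union G H) S"
    proof (intro allI impI)
      fix w assume "adj (disj_union G H) (Inr u) w \<and> w \<noteq> Inr v"
      then show "w \<in> forced_closure (disj_union G H) S" using force(5) by (cases w) auto
    qed
  qed
qed

lemma du_closure:
  "forced_closure (disj_union G H) S = Inl ` forced_closure G (Inl -` S) \<union> Inr ` forced_closure H (Inr -` S)"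
  using du_closure1[of _ G H S] du_closure2[of _ G S H] du_closure3[of _ H S G] by blast

lemma du_ZF_iff:
  "zero_forcing_set (disj_union G H) S \<longleftrightarrow>
     zero_forcing_set G (Inl -` S) \<and> zero_forcing_set H (Inr -` S)"
proof -
  have e: "((Inl ` A \<union> Inr ` B :: ('x + 'y) set) = Inl ` C \<union> Inr ` D) \<longleftrightarrow> A = C \<and> B = D" for A C :: "'x set" and B D :: "'y set"
    by (auto simp: set_eq_iff image_iff)
  have s: "(S \<subseteq> Inl ` A \<union> Inr ` B) \<longleftrightarrow> Inl -` S \<subseteq> A \<and> Inr -` S \<subseteq> B" for A :: "'a set" and B :: "'b set"
  proof
    assume "S \<subseteq> Inl ` A \<union> Inr ` B" then show "Inl -` S \<subseteq> A \<and> Inr -` S \<subseteq> B" by auto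
  next
    assume a: "Inl -` S \<subseteq> A \<and> Inr -` S \<subseteq> B"
    show "S \<subseteq> Inl ` A \<union> Inr ` B"
    proof
      fix x assume "x \<in> S" then show "x \<in> Inl ` A \<union> Inr ` B" using a by (cases x) auto
    qed
  qed
  show ?thesis unfolding zero_forcing_set_def du_closure du_adj_simps e s by auto
qed

lemma adjv_du: "adjv G \<Longrightarrow> adjv H \<Longrightarrow> adjv (disj_union G H)"
  unfolding adjv_def disj_union_def by (auto split: sum.splits)

lemma Z_du:
  assumes "finite (verts G)" "finite (verts H)" "adjv G" "adjv H"
  shows "zero_forcing_number (disj_union G H) = zero_forcing_number G + zero_forcing_number H"
proof (rule antisym)
  have fin: "finite (verts (disj_union G H))" using assms by simp
  obtain S1 where S1: "zero_forcing_set G S1" "card S1 = zero_forcing_number G" using Z_ex assms by blast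
  obtain S2 where S2: "zero_forcing_set H S2" "card S2 = zero_forcing_number H" using Z_ex assms by blast
  let ?S = "Inl ` S1 \<union> Inr ` S2"
  have "zero_forcing_set (disj_union G H) ?S" unfolding du_ZF_iff
    using S1 S2 by (auto simp add: vimage_Un vimage_image_eq image_def vimage_def)
  moreover have "card ?S = card S1 + card S2"
    using S1 S2 assms finite_subset[of S1 "verts G"] finite_subset[of S2 "verts H"]
    by (subst card_Un_disjoint) (auto simp: card_image zero_forcing_set_def)
  ultimately show "zero_forcing_number (disj_union G H) \<le> zero_forcing_number G + zero_forcing_number H"
    using Z_le[OF fin] S1 S2 by metis
  show "zero_forcing_number G + zero_forcing_number H \<le> zero_forcing_number (disj_union G H)"
  proof (rule Z_ge[OF fin adjv_du[OF assms(3,4)]])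
    fix S assume zs: "zero_forcing_set (disj_union G H) S"
    then have z1: "zero_forcing_set G (Inl -` S)"
      and z2: "zero_forcing_set H (Inr -` S)" unfolding du_ZF_iff by auto
    have f1: "finite (Inl -` S)" and f2: "finite (Inr -` S)" using z1 z2 assms finite_subset
      by (auto simp: zero_forcing_set_def)
    have Se: "S = Inl ` (Inl -` S) \<union> Inr ` (Inr -` S)"
    proof (intro equalityI subsetI)
      fix x assume "x \<in> S" then show "x \<in> Inl ` (Inl -` S) \<union> Inr ` (Inr -` S)" by (cases x) auto
    qed auto
    have "card S = card (Inl ` (Inl -` S) \<union> Inr ` (Inr -` S))" using Se by (rule arg_cong)
    also have "\<dots> = card (Inl -` S) + card (Inr -` S)"
    proof -
      have c1: "card (Inl ` (Inl -` S) :: ('a + 'b) set) = card (Inl -` S)" by (rule card_image) simp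
      have c2: "card (Inr ` (Inr -` S) :: ('a + 'b) set) = card (Inr -` S)" by (rule card_image) simp
      have "card (Inl ` (Inl -` S) \<union> Inr ` (Inr -` S) :: ('a + 'b) set) = card (Inl ` (Inl -` S) :: ('a + 'b) set) + card (Inr ` (Inr -` S) :: ('a + 'b) set)"
        by (rule card_Un_disjoint) (use f1 f2 in \<open>auto simp del: image_vimage_eq\<close>)
      then show ?thesis using c1 c2 by simp
    qed
    finally have "card S = card (Inl -` S) + card (Inr -` S)" .
    then show "zero_forcing_number G + zero_forcing_number H \<le> card S"
      using Z_le[OF assms(1) z1] Z_le[OF assms(2) z2] by simp
  qed
qed

lemma iso_closure:
  assumes "bij_betw f (verts G) (verts H)"
    and "\<forall>u\<in>verts G. \<forall>v\<in>verts G. adj G u v \<longleftrightarrow> adj H (f u) (f v)"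
    and "adjv G" "adjv H" "S \<subseteq> verts G" "x \<in> forced_closure G S"
  shows "f x \<in> forced_closure H (f ` S)"
  using assms(6)
proof induction
  case (init x) then show ?case by (auto intro: forced_closure.init)
next
  case (force u v)
  have uv: "u \<in> verts G" "v \<in> verts G" using force assms(3) by (auto simp: adjv_def)
  have IHu: "f u \<in> forced_closure H (f ` S)" using force by blast
  show ?case
  proof (rule forced_closure.force[OF IHu])
    show "f u \<in> verts H" using uv assms(1) by (auto simp: bij_betw_def)
    show "adj H (f u) (f v)" using uv assms(2) force by auto
    show "\<forall>w. adj H (f u) w \<and> w \<noteq> f v \<longrightarrow> w \<in> forced_closure H (f ` S)"
    proof (intro allI impI)
      fix w assume w: "adj H (f u) w \<and> w \<noteq> f v"
      then have "w \<in> verts H" using assms(4) by (auto simp: adjv_def)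
      then obtain w' where w': "w' \<in> verts G" "w = f w'" using assms(1) by (auto simp: bij_betw_def)
      then have "adj G u w'" "w' \<noteq> v" using w uv assms(2) by auto
      then show "w \<in> forced_closure H (f ` S)" using force(5) w' by auto
    qed
  qed
qed

lemma iso_Z_le:
  assumes "graph_iso G H" "adjv G" "adjv H" "finite (verts G)" "finite (verts H)"
  shows "zero_forcing_number H \<le> zero_forcing_number G"
proof -
  obtain f where f: "bij_betw f (verts G) (verts H)"
    "\<forall>u\<in>verts G. \<forall>v\<in>verts G. adj G u v \<longleftrightarrow> adj H (f u) (f v)"
    using assms(1) by (auto simp: graph_iso_def)
  obtain S where S: "zero_forcing_set G S" "card S = zero_forcing_number G" using Z_ex assms by blast
  have SV: "S \<subseteq> verts G" using S by (auto simp: zero_forcing_set_def)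
  have "zero_forcing_set H (f ` S)"
  proof -
    have "f ` S \<subseteq> verts H" using SV f(1) by (auto simp: bij_betw_def)
    moreover have "forced_closure H (f ` S) \<subseteq> verts H" using closure_sub_verts[OF assms(3) calculation] .
    moreover have "verts H \<subseteq> forced_closure H (f ` S)"
    proof
      fix y assume "y \<in> verts H"
      then obtain x where "x \<in> verts G" "y = f x" using f(1) by (auto simp: bij_betw_def)
      then show "y \<in> forced_closure H (f ` S)"
        using iso_closure[OF f assms(2,3) SV] S by (auto simp: zero_forcing_set_def)
    qed
    ultimately show ?thesis by (auto simp: zero_forcing_set_def)
  qed
  moreover have "card (f ` S) = card S"
    using SV f(1) by (metis bij_betw_def card_image inj_on_subset)
  ultimately show ?thesis using Z_le[OF assms(5)] S by metis
qed

lemma iso_sym: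
  assumes "graph_iso G H" shows "graph_iso H G"
proof -
  obtain f where f: "bij_betw f (verts G) (verts H)"
    "\<forall>u\<in>verts G. \<forall>v\<in>verts G. adj G u v \<longleftrightarrow> adj H (f u) (f v)"
    using assms(1) by (auto simp: graph_iso_def)
  let ?g = "inv_into (verts G) f"
  have g: "bij_betw ?g (verts H) (verts G)" using bij_betw_inv_into[OF f(1)] .
  have "\<forall>u\<in>verts H. \<forall>v\<in>verts H. adj H u v \<longleftrightarrow> adj G (?g u) (?g v)"
  proof (intro ballI)
    fix u v assume uv: "u \<in> verts H" "v \<in> verts H"
    then have "f (?g u) = u" "f (?g v) = v" using f(1) by (auto simp: bij_betw_inv_into_right)
    moreover have "?g u \<in> verts G" "?g v \<in> verts G" using g uv by (auto simp: bij_betw_def)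
    ultimately show "adj H u v \<longleftrightarrow> adj G (?g u) (?g v)" using f(2) by metis
  qed
  then show ?thesis using g by (auto simp: graph_iso_def)
qed



lemma gj_simps[simp]:
  "adj (graph_join G H) (Inl a) (Inl b) = adj G a b"
  "adj (graph_join G H) (Inr c) (Inr d) = adj H c d"
  "adj (graph_join G H) (Inl a) (Inr d) = (a \<in> verts G \<and> d \<in> verts H)"
  "adj (graph_join G H) (Inr c) (Inl b) = (c \<in> verts H \<and> b \<in> verts G)"
  "verts (graph_join G H) = Inl ` verts G \<union> Inr ` verts H"
  by (auto simp: graph_join_def)

lemma path_simps[simp]:
  "verts (path_graph m) = {..<m}"
  "adj (path_graph m) i j = (i < m \<and> j < m \<and> (j = i + 1 \<or> i = j + 1))"
  by (auto simp: path_graph_def)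

lemma sgraph_adjv: "sgraph G \<Longrightarrow> adjv G" by (auto simp: sgraph_def adjv_def)

lemma sgraph_path: "sgraph (path_graph m)" by (auto simp: sgraph_def)

lemma sgraph_join: "sgraph G \<Longrightarrow> sgraph H \<Longrightarrow> sgraph (graph_join G H)"
  unfolding sgraph_def graph_join_def by (auto split: sum.splits)

lemma sgraph_du: "sgraph G \<Longrightarrow> sgraph H \<Longrightarrow> sgraph (disj_union G H)"
  unfolding sgraph_def disj_union_def by (auto split: sum.splits)

lemma Z_join_path:
  assumes sg: "sgraph G" and cG: "card (verts G) = n" and n2: "n \<ge> 2" and mn: "m \<ge> n"
    and nb: "\<forall>a\<in>verts G. \<exists>c. adj G a c"
  shows "zero_forcing_number (graph_join G (path_graph m)) = n + 1"
proof (rule antisym)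
  let ?J = "graph_join G (path_graph m)"
  have sJ: "sgraph ?J" using sgraph_join[OF sg sgraph_path] .
  have finG: "finite (verts G)" using sg by (simp add: sgraph_def)
  have finJ: "finite (verts ?J)" using sJ by (simp add: sgraph_def)
  have m2: "m \<ge> 2" using n2 mn by simp
  let ?S = "insert (Inr 0) (Inl ` verts G) :: ('a + nat) set"
  have SV: "?S \<subseteq> verts ?J" using m2 by auto
  have path: "i < m \<Longrightarrow> Inr j \<in> forced_closure ?J ?S" if "j \<le> i" for i j
    using that
  proof (induction i arbitrary: j)
    case 0 then show ?case by (auto intro: forced_closure.init)
  next
    case (Suc i)
    show ?case
    proof (cases "j \<le> i")
      case True then show ?thesis using Suc by simp
    next
      case False
      then have j: "j = Suc i" using Suc by simp
      have ci: "Inr i \<in> forced_closure ?J ?S" using Suc by simp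
      have "Inr (Suc i) \<in> forced_closure ?J ?S"
      proof (rule forced_closure.force[OF ci])
        show "Inr i \<in> verts ?J" using Suc by auto
        show "adj ?J (Inr i) (Inr (Suc i))" using Suc by auto
        show "\<forall>w. adj ?J (Inr i) w \<and> w \<noteq> Inr (Suc i) \<longrightarrow> w \<in> forced_closure ?J ?S"
        proof (intro allI impI)
          fix w assume w: "adj ?J (Inr i) w \<and> w \<noteq> Inr (Suc i)"
          show "w \<in> forced_closure ?J ?S"
          proof (cases w)
            case (Inl b) then show ?thesis using w by (auto intro: forced_closure.init)
          next
            case (Inr j')
            then have "j' \<le> i" using w by auto
            then show ?thesis using Suc.IH[of j'] Suc.prems Inr by simp
          qed
        qed
      qed
      then show ?thesis using j by simp
    qed
  qed
  have "zero_forcing_set ?J ?S"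
  proof -
    have "forced_closure ?J ?S \<subseteq> verts ?J" by (rule closure_sub_verts[OF sgraph_adjv[OF sJ] SV])
    moreover have "verts ?J \<subseteq> forced_closure ?J ?S"
    proof
      fix x assume "x \<in> verts ?J"
      then show "x \<in> forced_closure ?J ?S"
        using path by (auto intro: forced_closure.init)
    qed
    ultimately show ?thesis using SV by (auto simp: zero_forcing_set_def)
  qed
  moreover have "card ?S = n + 1"
    using cG finG by (subst card_insert_disjoint) (auto simp: card_image)
  ultimately show "zero_forcing_number ?J \<le> n + 1" using Z_le[OF finJ] by metis
next
  let ?J = "graph_join G (path_graph m)"
  have sJ: "sgraph ?J" using sgraph_join[OF sg sgraph_path] .
  have finG: "finite (verts G)" using sg by (simp add: sgraph_def)
  have finJ: "finite (verts ?J)" using sJ by (simp add: sgraph_def)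
  have m2: "m \<ge> 2" using n2 mn by simp
  have fN: "finite (neighbors ?J x)" for x
    using sJ by (intro finite_subset[OF _ finJ]) (auto simp: neighbors_def sgraph_def)
  have cJ: "card (verts ?J) = n + m"
  proof -
    have "card (Inl ` verts G \<union> Inr ` {..<m} :: ('a + nat) set) = card (Inl ` verts G :: ('a + nat) set) + card (Inr ` {..<m} :: ('a + nat) set)"
      by (rule card_Un_disjoint) (use finG in auto)
    then show ?thesis using cG by (simp add: card_image)
  qed
  have deg: "n + 1 \<le> card (neighbors ?J x)" if x: "x \<in> verts ?J" for x
  proof (cases x)
    case (Inl a)
    then have a: "a \<in> verts G" using x by auto
    then obtain c where c: "adj G a c" using nb by auto
    have "insert (Inl c) (Inr ` {..<m}) \<subseteq> neighbors ?J x" using Inl a c by (auto simp: neighbors_def)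
    then have "card (insert (Inl c) (Inr ` {..<m}) :: ('a + nat) set) \<le> card (neighbors ?J x)"
      using fN by (rule card_mono[rotated])
    moreover have "card (insert (Inl c) (Inr ` {..<m}) :: ('a + nat) set) = m + 1"
      by (subst card_insert_disjoint) (auto simp: card_image)
    ultimately show ?thesis using mn by simp
  next
    case (Inr i)
    then have i: "i < m" using x by auto
    define j where "j = (if i + 1 < m then i + 1 else i - 1)"
    have j: "j < m" "j = i + 1 \<or> i = j + 1" using i m2 by (auto simp: j_def)
    have "insert (Inr j) (Inl ` verts G) \<subseteq> neighbors ?J x" using Inr i j by (auto simp: neighbors_def)
    then have "card (insert (Inr j) (Inl ` verts G) :: ('a + nat) set) \<le> card (neighbors ?J x)"
      using fN by (rule card_mono[rotated])
    moreover have "card (insert (Inr j) (Inl ` verts G) :: ('a + nat) set) = n + 1"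
      using cG finG by (subst card_insert_disjoint) (auto simp: card_image)
    ultimately show ?thesis by simp
  qed
  show "n + 1 \<le> zero_forcing_number ?J"
  proof (rule Z_ge[OF finJ sgraph_adjv[OF sJ]])
    fix S assume zs: "zero_forcing_set ?J S"
    have "\<forall>u\<in>verts ?J. n + 1 \<le> card (neighbors ?J u)" using deg by blast
    moreover have "n + 1 \<le> card (verts ?J)" using cJ m2 by simp
    ultimately show "n + 1 \<le> card S" using ZF_lower[OF sJ _ _ zs] by blast
  qed
qed



definition psi :: "('a + nat) + 'b \<Rightarrow> ('b + nat) + 'a" where
  "psi = case_sum (case_sum (\<lambda>a. Inr a) (\<lambda>p. Inl (Inr p))) (\<lambda>b. Inl (Inl b))"
definition phi :: "('b + nat) + 'a \<Rightarrow> ('a + nat) + 'b" where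
  "phi = case_sum (case_sum (\<lambda>b. Inr b) (\<lambda>p. Inl (Inr p))) (\<lambda>a. Inl (Inl a))"
definition wt :: "('a + nat) + 'b \<Rightarrow> real" where
  "wt = case_sum (case_sum (\<lambda>_. 1) (\<lambda>_. 0)) (\<lambda>_. -1)"
definition isP :: "('a + nat) + 'b \<Rightarrow> real" where
  "isP = case_sum (case_sum (\<lambda>_. 0) (\<lambda>_. 1)) (\<lambda>_. 0)"
definition Hh :: "nat \<Rightarrow> ('a + nat) + 'b \<Rightarrow> ('a + nat) + 'b \<Rightarrow> real" where
  "Hh n x z = (if x = z then 1 else 0) - wt x * wt z / real n"
definition ind :: "bool \<Rightarrow> real" where "ind b = (if b then 1 else 0)"

lemma psi_simps[simp]: "psi (Inl (Inl a)) = Inr a" "psi (Inl (Inr p)) = Inl (Inr p)" "psi (Inr b) = Inl (Inl b)"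
  by (auto simp: psi_def)
lemma phi_simps[simp]: "phi (Inl (Inl b)) = Inr b" "phi (Inl (Inr p)) = Inl (Inr p)" "phi (Inr a) = Inl (Inl a)"
  by (auto simp: phi_def)
lemma wt_simps[simp]: "wt (Inl (Inl a)) = 1" "wt (Inl (Inr p)) = 0" "wt (Inr b) = -1"
  by (auto simp: wt_def)
lemma isP_simps[simp]: "isP (Inl (Inl a)) = 0" "isP (Inl (Inr p)) = 1" "isP (Inr b) = 0"
  by (auto simp: isP_def)
lemma psi_phi[simp]: "psi (phi y) = y" by (cases y rule: sum.exhaust) (auto split: sum.splits simp: psi_def phi_def)
lemma phi_psi[simp]: "phi (psi y) = y" by (cases y rule: sum.exhaust) (auto split: sum.splits simp: psi_def phi_def)

lemma sum_sumset:
  assumes "finite A" "finite B"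
  shows "(\<Sum>z\<in>Inl ` A \<union> Inr ` B. f z) = (\<Sum>a\<in>A. f (Inl a)) + (\<Sum>b\<in>B. f (Inr b))"
proof -
  have "(\<Sum>z\<in>Inl ` A \<union> Inr ` B. f z) = (\<Sum>z\<in>Inl ` A. f z) + (\<Sum>z\<in>Inr ` B. f z)"
    by (rule sum.union_disjoint) (use assms in auto)
  also have "\<dots> = (\<Sum>a\<in>A. f (Inl a)) + (\<Sum>b\<in>B. f (Inr b))"
    by (simp add: sum.reindex)
  finally show ?thesis .
qed

lemma sum_ind: "finite A \<Longrightarrow> (\<Sum>a\<in>A. ind (P a)) = real (card {a\<in>A. P a})"
proof -
  assume "finite A"
  have "{a\<in>A. P a} = A \<inter> Collect P" by auto
  then show ?thesis unfolding ind_def using \<open>finite A\<close> by (simp add: sum.If_cases)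
qed

lemma ind_simps[simp]: "ind True = 1" "ind False = 0" by (auto simp: ind_def)

lemma vertex_enum_bij:
  assumes "finite (verts G)"
  shows "bij_betw (vertex_enum G) {..<card (verts G)} (verts G)"
proof -
  obtain h where "bij_betw h {0..<card (verts G)} (verts G)" using ex_bij_betw_nat_finite[OF assms] by blast
  then have "\<exists>f. bij_betw f {..<card (verts G)} (verts G)" by (auto simp: atLeast0LessThan)
  then show ?thesis unfolding vertex_enum_def by (rule someI_ex)
qed

context
  fixes G1 :: "'a graph" and G2 :: "'b graph" and k n m :: nat
  assumes s1: "sgraph G1" and s2: "sgraph G2"
    and r1: "regular k G1" and r2: "regular k G2"
    and c1: "card (verts G1) = n" and c2: "card (verts G2) = n" and npos: "n > 0"
begin

abbreviation "G' \<equiv> disj_union (graph_join G1 (path_graph m)) G2"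
abbreviation "G'' \<equiv> disj_union (graph_join G2 (path_graph m)) G1"

lemma f1: "finite (verts G1)" using s1 by (simp add: sgraph_def)
lemma f2: "finite (verts G2)" using s2 by (simp add: sgraph_def)

lemma sumV: "(\<Sum>z\<in>verts G'. f z) = (\<Sum>a\<in>verts G1. f (Inl (Inl a))) + (\<Sum>p<m. f (Inl (Inr p))) + (\<Sum>b\<in>verts G2. f (Inr b))"
  using f1 f2 by (simp add: sum_sumset)

lemma nbr1: "a' \<in> verts G1 \<Longrightarrow> card {a\<in>verts G1. adj G1 a a'} = k"
proof -
  assume a': "a' \<in> verts G1"
  have "{a\<in>verts G1. adj G1 a a'} = neighbors G1 a'" using s1 by (auto simp: sgraph_def neighbors_def)
  then show ?thesis using r1 a' by (simp add: regular_def)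
qed
lemma nbr2: "b' \<in> verts G2 \<Longrightarrow> card {b\<in>verts G2. adj G2 b b'} = k"
proof -
  assume b': "b' \<in> verts G2"
  have "{b\<in>verts G2. adj G2 b b'} = neighbors G2 b'" using s2 by (auto simp: sgraph_def neighbors_def)
  then show ?thesis using r2 b' by (simp add: regular_def)
qed
lemma nbr1': "a' \<in> verts G1 \<Longrightarrow> card {a\<in>verts G1. adj G1 a' a} = k"
proof -
  assume a': "a' \<in> verts G1"
  have "{a\<in>verts G1. adj G1 a' a} = neighbors G1 a'" using s1 by (auto simp: sgraph_def neighbors_def)
  then show ?thesis using r1 a' by (simp add: regular_def)
qed
lemma nbr2': "b' \<in> verts G2 \<Longrightarrow> card {b\<in>verts G2. adj G2 b' b} = k"
proof -
  assume b': "b' \<in> verts G2"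
  have "{b\<in>verts G2. adj G2 b' b} = neighbors G2 b'" using s2 by (auto simp: sgraph_def neighbors_def)
  then show ?thesis using r2 b' by (simp add: regular_def)
qed

lemma S1: assumes "x' \<in> verts G'"
  shows "(\<Sum>z\<in>verts G'. wt z * ind (adj G' z x')) = real k * wt x' + real n * isP x'"
proof -
  consider (A) a' where "x' = Inl (Inl a')" "a' \<in> verts G1" | (P) p where "x' = Inl (Inr p)" "p < m"
    | (B) b' where "x' = Inr b'" "b' \<in> verts G2" using assms by auto
  then show ?thesis
  proof cases
    case A then show ?thesis unfolding sumV using f1 nbr1 by (simp add: sum_ind)
  next
    case P then show ?thesis unfolding sumV using f1 c1 by (simp add: sum_ind)
  next
    case B then show ?thesis unfolding sumV using f2 nbr2 by (simp add: sum_ind sum_negf)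
  qed
qed

lemma S2: assumes "x \<in> verts G'"
  shows "(\<Sum>z\<in>verts G'. ind (adj G'' (psi x) (psi z)) * wt z) = real k * wt x - real n * isP x"
proof -
  consider (A) a' where "x = Inl (Inl a')" "a' \<in> verts G1" | (P) p where "x = Inl (Inr p)" "p < m"
    | (B) b' where "x = Inr b'" "b' \<in> verts G2" using assms by auto
  then show ?thesis
  proof cases
    case A then show ?thesis unfolding sumV using f1 nbr1' by (simp add: sum_ind)
  next
    case P then show ?thesis unfolding sumV using f2 c2 by (simp add: sum_ind sum_negf)
  next
    case B then show ?thesis unfolding sumV using f2 nbr2' by (simp add: sum_ind sum_negf)
  qed
qed

lemma sum_wt2: "(\<Sum>z\<in>verts G'. wt z * wt z) = 2 * real n"
  unfolding sumV using c1 c2 by simp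

lemma HH: assumes "x \<in> verts G'" "x' \<in> verts G'"
  shows "(\<Sum>z\<in>verts G'. Hh n x z * Hh n z x') = (if x = x' then 1 else 0)"
proof -
  have fin: "finite (verts G')" using f1 f2 by simp
  have pw: "Hh n x z * Hh n z x' = (if z = x then (if x = x' then 1 else 0) else 0)
      - (if z = x then wt x * wt x' / n else 0) - (if z = x' then wt x * wt x' / n else 0)
      + (wt x * wt x' / (real n * real n)) * (wt z * wt z)" for z
    using npos by (auto simp: Hh_def field_simps)
  let ?c = "wt x * wt x' / (real n * real n)"
  have "(\<Sum>z\<in>verts G'. Hh n x z * Hh n z x') = (\<Sum>z\<in>verts G'. (if z = x then (if x = x' then 1 else 0) else 0))
      - (\<Sum>z\<in>verts G'. (if z = x then wt x * wt x' / n else 0)) - (\<Sum>z\<in>verts G'. (if z = x' then wt x * wt x' / n else 0))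
      + ?c * (\<Sum>z\<in>verts G'. wt z * wt z)"
    unfolding pw by (simp only: sum.distrib sum_subtractf sum_distrib_left)
  also have "\<dots> = (if x = x' then 1 else 0) - wt x * wt x' / n - wt x * wt x' / n
     + ?c * (2 * real n)"
    unfolding sum_wt2 using assms fin by (simp add: sum.delta')
  also have "\<dots> = (if x = x' then 1 else 0)" using npos by (simp add: field_simps)
  finally show ?thesis .
qed

lemma core: assumes "x \<in> verts G'" "x' \<in> verts G'"
  shows "(\<Sum>z\<in>verts G'. Hh n x z * ind (adj G' z x')) = (\<Sum>z\<in>verts G'. ind (adj G'' (psi x) (psi z)) * Hh n z x')"
proof -
  have fin: "finite (verts G')" using f1 f2 by simp
  have pw1: "Hh n x z * ind (adj G' z x') = (if z = x then ind (adj G' x x') else 0) - wt x / n * (wt z * ind (adj G' z x'))" for z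
    by (auto simp: Hh_def field_simps)
  have pw2: "ind (adj G'' (psi x) (psi z)) * Hh n z x' = (if z = x' then ind (adj G'' (psi x) (psi x')) else 0) - wt x' / n * (ind (adj G'' (psi x) (psi z)) * wt z)" for z
    by (auto simp: Hh_def field_simps)
  have L: "(\<Sum>z\<in>verts G'. Hh n x z * ind (adj G' z x')) = ind (adj G' x x') - wt x / n * (real k * wt x' + real n * isP x')"
    unfolding pw1 sum_subtractf sum_distrib_left[symmetric] S1[OF assms(2)] using assms fin
    by (simp add: sum.delta')
  have R: "(\<Sum>z\<in>verts G'. ind (adj G'' (psi x) (psi z)) * Hh n z x') = ind (adj G'' (psi x) (psi x')) - wt x' / n * (real k * wt x - real n * isP x)"
    unfolding pw2 sum_subtractf sum_distrib_left[symmetric] S2[OF assms(1)] using assms fin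
    by (simp add: sum.delta')
  have key: "ind (adj G' x x') - wt x * isP x' = ind (adj G'' (psi x) (psi x')) + wt x' * isP x"
  proof -
    consider (A) a' where "x' = Inl (Inl a')" "a' \<in> verts G1" | (P) p where "x' = Inl (Inr p)" "p < m"
      | (B) b' where "x' = Inr b'" "b' \<in> verts G2" using assms by auto
    note cx' = this
    consider (A) a where "x = Inl (Inl a)" "a \<in> verts G1" | (P) q where "x = Inl (Inr q)" "q < m"
      | (B) b where "x = Inr b" "b \<in> verts G2" using assms by auto
    then show ?thesis
    proof cases
      case A then show ?thesis by - (rule cx'; simp)
    next
      case P then show ?thesis by - (rule cx'; simp)
    next
      case B then show ?thesis by - (rule cx'; simp)
    qed
  qed
  show ?thesis unfolding L R using npos key by (simp add: field_simps)
qed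


lemma mult_entry: "A \<in> carrier_mat N N \<Longrightarrow> B \<in> carrier_mat N N \<Longrightarrow> i < N \<Longrightarrow> l < N \<Longrightarrow>
   (A * B) $$ (i, l) = (\<Sum>j<N. A $$ (i, j) * B $$ (j, l))"
  by (auto simp: scalar_prod_def atLeast0LessThan intro!: sum.cong)

lemma cosp: "cospectral G' G''"
proof -
  let ?V1 = "verts G'" and ?V2 = "verts G''"
  have fin: "finite ?V1" using f1 f2 by simp
  define N where "N = card ?V1"
  have bphi: "bij_betw phi ?V2 ?V1"
    by (rule bij_betw_byWitness[where f'=psi]) auto
  have cN: "card ?V2 = N" using bij_betw_same_card[OF bphi] N_def by simp
  have fin2: "finite ?V2" using f1 f2 by simp
  define e1 where "e1 = vertex_enum G'"
  define e2 where "e2 = vertex_enum G''"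
  have b1: "bij_betw e1 {..<N} ?V1" unfolding e1_def N_def by (rule vertex_enum_bij[OF fin])
  have b2: "bij_betw e2 {..<N} ?V2" unfolding e2_def cN[symmetric] by (rule vertex_enum_bij[OF fin2])
  have b3: "bij_betw (phi \<circ> e2) {..<N} ?V1" using bij_betw_trans[OF b2 bphi] .
  have e1V: "i < N \<Longrightarrow> e1 i \<in> ?V1" for i using bij_betw_apply[OF b1] by simp
  have e2V: "i < N \<Longrightarrow> phi (e2 i) \<in> ?V1" for i using bij_betw_apply[OF b3] by simp
  have inj1: "i < N \<Longrightarrow> l < N \<Longrightarrow> e1 i = e1 l \<longleftrightarrow> i = l" for i l
    using b1 by (auto simp: bij_betw_def inj_on_def)
  have inj3: "i < N \<Longrightarrow> l < N \<Longrightarrow> phi (e2 i) = phi (e2 l) \<longleftrightarrow> i = l" for i l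
    using b3 by (auto simp: bij_betw_def inj_on_def)
  have re1: "(\<Sum>j<N. g (e1 j)) = (\<Sum>z\<in>?V1. g z)" for g :: "_ \<Rightarrow> real"
    using sum.reindex_bij_betw[OF b1] .
  have re3: "(\<Sum>j<N. g (phi (e2 j))) = (\<Sum>z\<in>?V1. g z)" for g :: "_ \<Rightarrow> real"
    using sum.reindex_bij_betw[OF b3, of g] by simp
  define A1 where "A1 = adj_matrix G'"
  define A2 where "A2 = adj_matrix G''"
  define P where "P = mat N N (\<lambda>(i, j). Hh n (phi (e2 i)) (e1 j))"
  define Q where "Q = mat N N (\<lambda>(i, j). Hh n (e1 i) (phi (e2 j)))"
  have A1c: "A1 \<in> carrier_mat N N" unfolding A1_def adj_matrix_def N_def by simp
  have A2c: "A2 \<in> carrier_mat N N" unfolding A2_def adj_matrix_def cN by simp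
  have Pc: "P \<in> carrier_mat N N" and Qc: "Q \<in> carrier_mat N N" unfolding P_def Q_def by auto
  have A1e: "i < N \<Longrightarrow> j < N \<Longrightarrow> A1 $$ (i, j) = ind (adj G' (e1 i) (e1 j))" for i j
    unfolding A1_def adj_matrix_def e1_def N_def ind_def by simp
  have A2e: "i < N \<Longrightarrow> j < N \<Longrightarrow> A2 $$ (i, j) = ind (adj G'' (e2 i) (e2 j))" for i j
    unfolding A2_def adj_matrix_def e2_def cN ind_def by simp
  have PQ: "P * Q = 1\<^sub>m N"
  proof (rule eq_matI)
    fix i l assume il: "i < dim_row (1\<^sub>m N :: real mat)" "l < dim_col (1\<^sub>m N :: real mat)"
    then have il: "i < N" "l < N" by auto
    have "(P * Q) $$ (i, l) = (\<Sum>j<N. Hh n (phi (e2 i)) (e1 j) * Hh n (e1 j) (phi (e2 l)))"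
      unfolding mult_entry[OF Pc Qc il] by (intro sum.cong) (auto simp: P_def Q_def il)
    also have "\<dots> = (\<Sum>z\<in>?V1. Hh n (phi (e2 i)) z * Hh n z (phi (e2 l)))"
      by (rule re1)
    also have "\<dots> = (if i = l then 1 else 0)" using HH[OF e2V e2V] il inj3 by simp
    finally show "(P * Q) $$ (i, l) = 1\<^sub>m N $$ (i, l)" using il by simp
  qed (use Pc Qc in auto)
  have QP: "Q * P = 1\<^sub>m N"
  proof (rule eq_matI)
    fix i l assume il: "i < dim_row (1\<^sub>m N :: real mat)" "l < dim_col (1\<^sub>m N :: real mat)"
    then have il: "i < N" "l < N" by auto
    have "(Q * P) $$ (i, l) = (\<Sum>j<N. Hh n (e1 i) (phi (e2 j)) * Hh n (phi (e2 j)) (e1 l))"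
      unfolding mult_entry[OF Qc Pc il] by (intro sum.cong) (auto simp: P_def Q_def il)
    also have "\<dots> = (\<Sum>z\<in>?V1. Hh n (e1 i) z * Hh n z (e1 l))"
      by (rule re3)
    also have "\<dots> = (if i = l then 1 else 0)" using HH[OF e1V e1V] il inj1 by simp
    finally show "(Q * P) $$ (i, l) = 1\<^sub>m N $$ (i, l)" using il by simp
  qed (use Pc Qc in auto)
  have PA: "P * A1 = A2 * P"
  proof (rule eq_matI)
    fix i l assume il: "i < dim_row (A2 * P)" "l < dim_col (A2 * P)"
    then have il: "i < N" "l < N" using A2c Pc by auto
    have "(P * A1) $$ (i, l) = (\<Sum>j<N. Hh n (phi (e2 i)) (e1 j) * ind (adj G' (e1 j) (e1 l)))"
      unfolding mult_entry[OF Pc A1c il] by (intro sum.cong) (auto simp: P_def A1e il)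
    also have "\<dots> = (\<Sum>z\<in>?V1. Hh n (phi (e2 i)) z * ind (adj G' z (e1 l)))"
      by (rule re1)
    also have "\<dots> = (\<Sum>z\<in>?V1. ind (adj G'' (psi (phi (e2 i))) (psi z)) * Hh n z (e1 l))"
      by (rule core[OF e2V e1V]) (use il in auto)
    also have "\<dots> = (\<Sum>j<N. ind (adj G'' (e2 i) (e2 j)) * Hh n (phi (e2 j)) (e1 l))"
      using re3[of "\<lambda>z. ind (adj G'' (psi (phi (e2 i))) (psi z)) * Hh n z (e1 l)"] by simp
    also have "\<dots> = (A2 * P) $$ (i, l)"
      unfolding mult_entry[OF A2c Pc il] by (intro sum.cong) (auto simp: P_def A2e il)
    finally show "(P * A1) $$ (i, l) = (A2 * P) $$ (i, l)" .
  qed (use Pc A1c A2c in auto)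
  have "A2 = A2 * (P * Q)" using PQ A2c by simp
  also have "\<dots> = (A2 * P) * Q" using A2c Pc Qc by (simp add: assoc_mult_mat)
  also have "\<dots> = P * A1 * Q" using PA by simp
  finally have "A2 = P * A1 * Q" .
  then have "similar_mat A2 A1" using A1c A2c Pc Qc PQ QP similar_matI[of A2 A1 P Q N] by auto
  then have "char_poly A2 = char_poly A1" by (rule char_poly_similar)
  then show ?thesis unfolding cospectral_def A1_def A2_def by simp
qed
end


theorem theorem5p1:
  fixes G1 :: "'a graph" and G2 :: "'b graph" and k n m :: nat
  assumes "sgraph G1" and "sgraph G2"
    and "connected_graph G1" and "connected_graph G2"
    and "regular k G1" and "regular k G2"
    and "card (verts G1) = n" and "card (verts G2) = n"
    and "zero_forcing_number G1 \<noteq> zero_forcing_number G2"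
    and "m \<ge> n"
  shows "\<not> graph_iso (disj_union (graph_join G1 (path_graph m)) G2)
                     (disj_union (graph_join G2 (path_graph m)) G1)
       \<and> cospectral (disj_union (graph_join G1 (path_graph m)) G2)
                    (disj_union (graph_join G2 (path_graph m)) G1)
       \<and> zero_forcing_number (disj_union (graph_join G1 (path_graph m)) G2)
           \<noteq> zero_forcing_number (disj_union (graph_join G2 (path_graph m)) G1)"
proof -
  note s1 = assms(1) and s2 = assms(2) and cn1 = assms(3) and cn2 = assms(4)
  have fin1: "finite (verts G1)" and fin2: "finite (verts G2)" using s1 s2 by (auto simp: sgraph_def)
  have ne1: "verts G1 \<noteq> {}" and ne2: "verts G2 \<noteq> {}" using cn1 cn2 by (auto simp: connected_graph_def)
  have npos: "n > 0" using fin1 ne1 assms(7) by (auto simp: card_gt_0_iff)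
  have zb1: "1 \<le> zero_forcing_number G1" "zero_forcing_number G1 \<le> n"
    using Z_pos_le[OF fin1 sgraph_adjv[OF s1] ne1] assms(7) by auto
  have zb2: "1 \<le> zero_forcing_number G2" "zero_forcing_number G2 \<le> n"
    using Z_pos_le[OF fin2 sgraph_adjv[OF s2] ne2] assms(8) by auto
  have n2: "n \<ge> 2" using zb1 zb2 assms(9) by linarith
  have nbr: "\<forall>a\<in>verts G. \<exists>c. adj G a c"
    if sG: "sgraph G" and cG: "connected_graph G" and ccG: "card (verts G) = n" for G :: "'c graph"
  proof
    fix a assume a: "a \<in> verts G"
    have fG: "finite (verts G)" using sG by (simp add: sgraph_def)
    have "card (verts G - {a}) \<ge> 1" using a n2 ccG fG by (simp add: card_Diff_singleton)
    then obtain b where b: "b \<in> verts G" "b \<noteq> a" by (metis Diff_iff all_not_in_conv card.empty insert_iff not_one_le_zero)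
    have "(a, b) \<in> {(x, y). adj G x y}\<^sup>*" using cG a b by (auto simp: connected_graph_def)
    then show "\<exists>c. adj G a c" using b(2) by (cases rule: converse_rtranclE) auto
  qed
  have zj1: "zero_forcing_number (graph_join G1 (path_graph m)) = n + 1"
    using Z_join_path[OF s1 assms(7) n2 assms(10) nbr[OF s1 cn1 assms(7)]] .
  have zj2: "zero_forcing_number (graph_join G2 (path_graph m)) = n + 1"
    using Z_join_path[OF s2 assms(8) n2 assms(10) nbr[OF s2 cn2 assms(8)]] .
  have sj1: "sgraph (graph_join G1 (path_graph m))" by (rule sgraph_join[OF s1 sgraph_path])
  have sj2: "sgraph (graph_join G2 (path_graph m))" by (rule sgraph_join[OF s2 sgraph_path])
  have Z1: "zero_forcing_number (disj_union (graph_join G1 (path_graph m)) G2) = n + 1 + zero_forcing_number G2"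
    using Z_du[of "graph_join G1 (path_graph m)" G2] sj1 s2 zj1
    by (simp add: sgraph_adjv sgraph_def[of "graph_join G1 (path_graph m)"] fin2)
  have Z2: "zero_forcing_number (disj_union (graph_join G2 (path_graph m)) G1) = n + 1 + zero_forcing_number G1"
    using Z_du[of "graph_join G2 (path_graph m)" G1] sj2 s1 zj2
    by (simp add: sgraph_adjv sgraph_def[of "graph_join G2 (path_graph m)"] fin1)
  have Zne: "zero_forcing_number (disj_union (graph_join G1 (path_graph m)) G2)
           \<noteq> zero_forcing_number (disj_union (graph_join G2 (path_graph m)) G1)"
    using Z1 Z2 assms(9) by simp
  have sd1: "sgraph (disj_union (graph_join G1 (path_graph m)) G2)" by (rule sgraph_du[OF sj1 s2])
  have sd2: "sgraph (disj_union (graph_join G2 (path_graph m)) G1)" by (rule sgraph_du[OF sj2 s1])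
  have niso: "\<not> graph_iso (disj_union (graph_join G1 (path_graph m)) G2)
                     (disj_union (graph_join G2 (path_graph m)) G1)"
  proof
    assume iso: "graph_iso (disj_union (graph_join G1 (path_graph m)) G2)
                     (disj_union (graph_join G2 (path_graph m)) G1)"
    have fd1: "finite (verts (disj_union (graph_join G1 (path_graph m)) G2))" using sd1 by (simp add: sgraph_def)
    have fd2: "finite (verts (disj_union (graph_join G2 (path_graph m)) G1))" using sd2 by (simp add: sgraph_def)
    have "zero_forcing_number (disj_union (graph_join G2 (path_graph m)) G1)
          \<le> zero_forcing_number (disj_union (graph_join G1 (path_graph m)) G2)"
      by (rule iso_Z_le[OF iso sgraph_adjv[OF sd1] sgraph_adjv[OF sd2] fd1 fd2])
    moreover have "zero_forcing_number (disj_union (graph_join G1 (path_graph m)) G2)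
          \<le> zero_forcing_number (disj_union (graph_join G2 (path_graph m)) G1)"
      by (rule iso_Z_le[OF iso_sym[OF iso] sgraph_adjv[OF sd2] sgraph_adjv[OF sd1] fd2 fd1])
    ultimately show False using Zne by simp
  qed
  have cs: "cospectral (disj_union (graph_join G1 (path_graph m)) G2)
                    (disj_union (graph_join G2 (path_graph m)) G1)"
    by (rule cosp[OF s1 s2 assms(5,6,7,8) npos])
  show ?thesis using niso cs Zne by blast
qed

end
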